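(* Let $A$ be a commutative ring and $E$ an $A$-module. Then the trivial ring extension $A\propto E$ is locally stable if and only if $A$ is locally stable.
   Context: All rings are commutative with identity. The trivial ring extension $A\propto E$ is the set of pairs $(a,e)$, $a\in A$, $e\in E$, with componentwise addition and multiplication $(a,e)(b,f)=(ab,af+be)$. A ring $S$ has stable range 1 if whenever $aS+bS=S$ there is $y\in S$ with $a+by$ a unit. $S$ is locally stable if whenever $a,b\in S$ with $aS+bS=S$ there is $y\in S$ such that $S/(a+by)S$ has stable range 1. *)

theory Defs
  imports "HOL-Algebra.Module" "HOL-Algebra.QuotRing"
begin

definition stable_range_one :: "('a, 'm) ring_scheme \<Rightarrow> bool" where
  "stable_range_one S \<longleftrightarrow>
     (\<forall>a \<in> carrier S. \<forall>b \<in> carrier S.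
        (\<exists>x \<in> carrier S. \<exists>z \<in> carrier S. a \<otimes>\<^bsub>S\<^esub> x \<oplus>\<^bsub>S\<^esub> b \<otimes>\<^bsub>S\<^esub> z = \<one>\<^bsub>S\<^esub>)
        \<longrightarrow> (\<exists>y \<in> carrier S. a \<oplus>\<^bsub>S\<^esub> b \<otimes>\<^bsub>S\<^esub> y \<in> Units S))"

definition locally_stable :: "('a, 'm) ring_scheme \<Rightarrow> bool" where
  "locally_stable S \<longleftrightarrow>
     (\<forall>a \<in> carrier S. \<forall>b \<in> carrier S.
        (\<exists>x \<in> carrier S. \<exists>z \<in> carrier S. a \<otimes>\<^bsub>S\<^esub> x \<oplus>\<^bsub>S\<^esub> b \<otimes>\<^bsub>S\<^esub> z = \<one>\<^bsub>S\<^esub>)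
        \<longrightarrow> (\<exists>y \<in> carrier S. stable_range_one (S Quot (PIdl\<^bsub>S\<^esub> (a \<oplus>\<^bsub>S\<^esub> b \<otimes>\<^bsub>S\<^esub> y)))))"

definition triv_ext :: "('a, 'c) ring_scheme \<Rightarrow> ('a, 'b, 'd) module_scheme \<Rightarrow> ('a \<times> 'b) ring" where
  "triv_ext A E =
    \<lparr> carrier = carrier A \<times> carrier E,
      mult = (\<lambda>(a, e) (b, f). (a \<otimes>\<^bsub>A\<^esub> b, (a \<odot>\<^bsub>E\<^esub> f) \<oplus>\<^bsub>E\<^esub> (b \<odot>\<^bsub>E\<^esub> e))),
      one = (\<one>\<^bsub>A\<^esub>, \<zero>\<^bsub>E\<^esub>),
      zero = (\<zero>\<^bsub>A\<^esub>, \<zero>\<^bsub>E\<^esub>),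
      add = (\<lambda>(a, e) (b, f). (a \<oplus>\<^bsub>A\<^esub> b, e \<oplus>\<^bsub>E\<^esub> f)) \<rparr>"

end

theory Submission
  imports Defs
begin

lemma triv_ext_simps:
  "carrier (triv_ext A E) = carrier A \<times> carrier E"
  "(a, e) \<otimes>\<^bsub>triv_ext A E\<^esub> (b, f) = (a \<otimes>\<^bsub>A\<^esub> b, (a \<odot>\<^bsub>E\<^esub> f) \<oplus>\<^bsub>E\<^esub> (b \<odot>\<^bsub>E\<^esub> e))"
  "(a, e) \<oplus>\<^bsub>triv_ext A E\<^esub> (b, f) = (a \<oplus>\<^bsub>A\<^esub> b, e \<oplus>\<^bsub>E\<^esub> f)"
  "\<one>\<^bsub>triv_ext A E\<^esub> = (\<one>\<^bsub>A\<^esub>, \<zero>\<^bsub>E\<^esub>)"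
  "\<zero>\<^bsub>triv_ext A E\<^esub> = (\<zero>\<^bsub>A\<^esub>, \<zero>\<^bsub>E\<^esub>)"
  by (simp_all add: triv_ext_def)

lemma (in module) smult_comm:
  "a \<in> carrier R \<Longrightarrow> b \<in> carrier R \<Longrightarrow> x \<in> carrier M \<Longrightarrow>
   a \<odot>\<^bsub>M\<^esub> (b \<odot>\<^bsub>M\<^esub> x) = b \<odot>\<^bsub>M\<^esub> (a \<odot>\<^bsub>M\<^esub> x)"
  by (metis smult_assoc1 R.m_comm)

lemma triv_ext_cring:
  assumes "module A E"
  shows "cring (triv_ext A E)"
proof -
  interpret module A E by fact
  note S = triv_ext_simps
  show ?thesis
  proof (rule cringI)
    show "abelian_group (triv_ext A E)"
    proof (rule abelian_groupI, goal_cases)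
      case 1 then show ?case by (auto simp: S)
    next
      case 2 then show ?case by (auto simp: S)
    next
      case 3 then show ?case by (auto simp: S R.a_assoc M.a_assoc)
    next
      case 4 then show ?case by (auto simp: S R.a_comm M.a_comm)
    next
      case 5 then show ?case by (auto simp: S)
    next
      case (6 x) then show ?case
        by (cases x) (auto simp: S intro!: bexI[of _ "(\<ominus>\<^bsub>A\<^esub> fst x, \<ominus>\<^bsub>E\<^esub> snd x)"])
    qed
  next
    show "comm_monoid (triv_ext A E)"
    proof (rule comm_monoidI, goal_cases)
      case 1 then show ?case by (auto simp: S)
    next
      case 2 then show ?case by (auto simp: S)
    next
      case (3 x y z) then show ?case
        by (cases x; cases y; cases z)
          (auto simp: S R.m_assoc smult_r_distr smult_assoc1 M.a_ac smult_comm)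
    next
      case (4 x) then show ?case by (cases x) (auto simp: S)
    next
      case (5 x y) then show ?case
        by (cases x; cases y) (auto simp: S R.m_comm M.a_comm)
    qed
  next
    fix x y z assume "x \<in> carrier (triv_ext A E)" "y \<in> carrier (triv_ext A E)" "z \<in> carrier (triv_ext A E)"
    then show "(x \<oplus>\<^bsub>triv_ext A E\<^esub> y) \<otimes>\<^bsub>triv_ext A E\<^esub> z = x \<otimes>\<^bsub>triv_ext A E\<^esub> z \<oplus>\<^bsub>triv_ext A E\<^esub> y \<otimes>\<^bsub>triv_ext A E\<^esub> z"
      by (cases x; cases y; cases z)
         (auto simp: S R.l_distr smult_r_distr smult_l_distr M.a_ac)
  qed
qed


definition sr1_mod :: "('a, 'm) ring_scheme \<Rightarrow> 'a set \<Rightarrow> bool" where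
  "sr1_mod S I \<longleftrightarrow>
     (\<forall>a \<in> carrier S. \<forall>b \<in> carrier S.
        (\<exists>x \<in> carrier S. \<exists>z \<in> carrier S. a \<otimes>\<^bsub>S\<^esub> x \<oplus>\<^bsub>S\<^esub> b \<otimes>\<^bsub>S\<^esub> z \<ominus>\<^bsub>S\<^esub> \<one>\<^bsub>S\<^esub> \<in> I)
        \<longrightarrow> (\<exists>y \<in> carrier S. \<exists>u \<in> carrier S. (a \<oplus>\<^bsub>S\<^esub> b \<otimes>\<^bsub>S\<^esub> y) \<otimes>\<^bsub>S\<^esub> u \<ominus>\<^bsub>S\<^esub> \<one>\<^bsub>S\<^esub> \<in> I))"

lemma quot_sr1:
  fixes S (structure)
  assumes "cring S" "ideal I S"
  shows "stable_range_one (S Quot I) \<longleftrightarrow> sr1_mod S I"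
proof -
  interpret cring S by fact
  interpret ideal I S by fact
  have Qc: "cring (S Quot I)" by (rule quotient_is_cring) fact
  have hom: "(\<lambda>x. I +>\<^bsub>S\<^esub> x) \<in> ring_hom S (S Quot I)" by (rule rcos_ring_hom)
  have Qr: "ring (S Quot I)" by (rule quotient_is_ring)
  note qcl = ring.ring_simprules(1)[OF Qr] ring.ring_simprules(5)[OF Qr]
  note hs = ring_hom_mult[OF hom] ring_hom_add[OF hom] ring_hom_one[OF hom] ring_hom_closed[OF hom]
  let ?p = "(\<lambda>x. I +>\<^bsub>S\<^esub> x)"
  have carr: "carrier (S Quot I) = ?p ` carrier S"
    by (auto simp: FactRing_def A_RCOSETS_defs a_r_coset_def)
  have eq: "?p p = ?p q \<longleftrightarrow> p \<ominus> q \<in> I" if "p \<in> carrier S" "q \<in> carrier S" for p q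
  proof
    assume "?p p = ?p q"
    moreover have "p \<in> ?p p" using that a_rcos_self by blast
    ultimately have "p \<in> ?p q" by simp
    then show "p \<ominus> q \<in> I" using a_rcos_module_minus[OF ring_axioms that(2) that(1)] by simp
  next
    assume "p \<ominus> q \<in> I"
    then have "p \<in> ?p q" using a_rcos_module_minus[OF ring_axioms that(2) that(1)] by simp
    then show "?p p = ?p q" using a_repr_independence'[of p q] that by simp
  qed
  
  have units: "X \<in> Units (S Quot I) \<longleftrightarrow> X \<in> carrier (S Quot I) \<and> (\<exists>Y\<in>carrier (S Quot I). X \<otimes>\<^bsub>S Quot I\<^esub> Y = \<one>\<^bsub>S Quot I\<^esub>)" for X
    unfolding Units_def using comm_monoid.m_comm[OF cring.axioms(2)[OF Qc]] by (auto; metis)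
  show ?thesis
  proof
    assume H: "stable_range_one (S Quot I)"
    show "sr1_mod S I" unfolding sr1_mod_def
    proof (intro ballI impI)
      fix a b assume ab: "a \<in> carrier S" "b \<in> carrier S"
        and "\<exists>x \<in> carrier S. \<exists>z \<in> carrier S. a \<otimes> x \<oplus> b \<otimes> z \<ominus> \<one> \<in> I"
      then obtain x z where xz: "x \<in> carrier S" "z \<in> carrier S" "a \<otimes> x \<oplus> b \<otimes> z \<ominus> \<one> \<in> I" by blast
      have "?p (a \<otimes> x \<oplus> b \<otimes> z) = ?p \<one>" using eq xz ab by simp
      then have "?p a \<otimes>\<^bsub>S Quot I\<^esub> ?p x \<oplus>\<^bsub>S Quot I\<^esub> ?p b \<otimes>\<^bsub>S Quot I\<^esub> ?p z = \<one>\<^bsub>S Quot I\<^esub>"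
        using ab xz by (simp add: hs)
      moreover have "?p a \<in> carrier (S Quot I)" "?p b \<in> carrier (S Quot I)" "?p x \<in> carrier (S Quot I)" "?p z \<in> carrier (S Quot I)"
        using ab xz by (auto simp: hs)
      ultimately obtain Y where Y: "Y \<in> carrier (S Quot I)" "?p a \<oplus>\<^bsub>S Quot I\<^esub> ?p b \<otimes>\<^bsub>S Quot I\<^esub> Y \<in> Units (S Quot I)"
        using H unfolding stable_range_one_def by blast
      then obtain y where y: "y \<in> carrier S" "Y = ?p y" using carr by auto
      from Y(2) obtain U where U: "U \<in> carrier (S Quot I)" "(?p a \<oplus>\<^bsub>S Quot I\<^esub> ?p b \<otimes>\<^bsub>S Quot I\<^esub> Y) \<otimes>\<^bsub>S Quot I\<^esub> U = \<one>\<^bsub>S Quot I\<^esub>"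
        unfolding units by blast
      then obtain u where u: "u \<in> carrier S" "U = ?p u" using carr by auto
      have "?p ((a \<oplus> b \<otimes> y) \<otimes> u) = ?p \<one>" using U u y ab by (simp add: hs)
      then have "(a \<oplus> b \<otimes> y) \<otimes> u \<ominus> \<one> \<in> I" using eq ab y u by simp
      then show "\<exists>y \<in> carrier S. \<exists>u \<in> carrier S. (a \<oplus> b \<otimes> y) \<otimes> u \<ominus> \<one> \<in> I" using y u by blast
    qed
  next
    assume H: "sr1_mod S I"
    show "stable_range_one (S Quot I)" unfolding stable_range_one_def
    proof (intro ballI impI)
      fix A B assume AB: "A \<in> carrier (S Quot I)" "B \<in> carrier (S Quot I)"
        and "\<exists>X \<in> carrier (S Quot I). \<exists>Z \<in> carrier (S Quot I). A \<otimes>\<^bsub>S Quot I\<^esub> X \<oplus>\<^bsub>S Quot I\<^esub> B \<otimes>\<^bsub>S Quot I\<^esub> Z = \<one>\<^bsub>S Quot I\<^esub>"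
      then obtain X Z where XZ: "X \<in> carrier (S Quot I)" "Z \<in> carrier (S Quot I)"
        "A \<otimes>\<^bsub>S Quot I\<^esub> X \<oplus>\<^bsub>S Quot I\<^esub> B \<otimes>\<^bsub>S Quot I\<^esub> Z = \<one>\<^bsub>S Quot I\<^esub>" by blast
      obtain a where a: "a \<in> carrier S" "A = ?p a" using AB(1) carr by auto
      obtain b where b: "b \<in> carrier S" "B = ?p b" using AB(2) carr by auto
      obtain x where x: "x \<in> carrier S" "X = ?p x" using XZ(1) carr by auto
      obtain z where z: "z \<in> carrier S" "Z = ?p z" using XZ(2) carr by auto
      note el = a(1) b(1) x(1) z(1) a(2) b(2) x(2) z(2)
      have "?p (a \<otimes> x \<oplus> b \<otimes> z) = ?p \<one>" using XZ(3) el by (simp add: hs)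
      then have "a \<otimes> x \<oplus> b \<otimes> z \<ominus> \<one> \<in> I" using eq el by simp
      then obtain y u where yu: "y \<in> carrier S" "u \<in> carrier S" "(a \<oplus> b \<otimes> y) \<otimes> u \<ominus> \<one> \<in> I"
        using H el unfolding sr1_mod_def by blast
      then have "?p ((a \<oplus> b \<otimes> y) \<otimes> u) = ?p \<one>" using eq el yu by simp
      then have "(A \<oplus>\<^bsub>S Quot I\<^esub> B \<otimes>\<^bsub>S Quot I\<^esub> ?p y) \<otimes>\<^bsub>S Quot I\<^esub> ?p u = \<one>\<^bsub>S Quot I\<^esub>"
        using el yu by (simp add: hs)
      moreover have "A \<oplus>\<^bsub>S Quot I\<^esub> B \<otimes>\<^bsub>S Quot I\<^esub> ?p y \<in> carrier (S Quot I)" "?p u \<in> carrier (S Quot I)" "?p y \<in> carrier (S Quot I)"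
        using AB yu by (auto simp: hs intro!: qcl)
      ultimately show "\<exists>Y \<in> carrier (S Quot I). A \<oplus>\<^bsub>S Quot I\<^esub> B \<otimes>\<^bsub>S Quot I\<^esub> Y \<in> Units (S Quot I)"
        unfolding units by blast
    qed
  qed
qed

lemma fix2:
  fixes S (structure)
  assumes "cring S" and c: "p \<in> carrier S" "u \<in> carrier S" "q \<in> carrier S" "v \<in> carrier S"
    "c \<in> carrier S" "c' \<in> carrier S" "W \<in> carrier S" "r \<in> carrier S"
    and e1: "p \<otimes> u \<oplus> q \<otimes> v = c \<oplus> W \<otimes> r" and e2: "c \<otimes> c' = \<one>"
  shows "p \<otimes> (u \<otimes> c') \<oplus> q \<otimes> (v \<otimes> c') = \<one> \<oplus> (W \<otimes> c') \<otimes> r"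
proof -
  interpret cring S by fact
  have "p \<otimes> (u \<otimes> c') \<oplus> q \<otimes> (v \<otimes> c') = (p \<otimes> u \<oplus> q \<otimes> v) \<otimes> c'"
    using c by (simp add: l_distr m_assoc)
  also have "\<dots> = (c \<oplus> W \<otimes> r) \<otimes> c'" using e1 by simp
  also have "\<dots> = c \<otimes> c' \<oplus> (W \<otimes> c') \<otimes> r" using c by (simp add: l_distr m_assoc m_comm[of r c'])
  also have "\<dots> = \<one> \<oplus> (W \<otimes> c') \<otimes> r" using e2 by simp
  finally show ?thesis .
qed

lemma fix1:
  fixes S (structure)
  assumes "cring S" and c: "p \<in> carrier S" "u \<in> carrier S"
    "c \<in> carrier S" "c' \<in> carrier S" "W \<in> carrier S" "r \<in> carrier S"
    and e1: "p \<otimes> u = c \<oplus> W \<otimes> r" and e2: "c \<otimes> c' = \<one>"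
  shows "p \<otimes> (u \<otimes> c') = \<one> \<oplus> (W \<otimes> c') \<otimes> r"
proof -
  interpret cring S by fact
  have "p \<otimes> (u \<otimes> c') = (p \<otimes> u) \<otimes> c'"
    using c by (simp add: m_assoc)
  also have "\<dots> = (c \<oplus> W \<otimes> r) \<otimes> c'" using e1 by simp
  also have "\<dots> = c \<otimes> c' \<oplus> (W \<otimes> c') \<otimes> r" using c by (simp add: l_distr m_assoc m_comm[of r c'])
  also have "\<dots> = \<one> \<oplus> (W \<otimes> c') \<otimes> r" using e2 by simp
  finally show ?thesis .
qed

lemma fix0:
  fixes S (structure)
  assumes "cring S" and c: "p \<in> carrier S" "u \<in> carrier S" "q \<in> carrier S" "v \<in> carrier S"
    "c \<in> carrier S" "c' \<in> carrier S"
    and e1: "p \<otimes> u \<oplus> q \<otimes> v = c" and e2: "c \<otimes> c' = \<one>"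
  shows "p \<otimes> (u \<otimes> c') \<oplus> q \<otimes> (v \<otimes> c') = \<one>"
proof -
  interpret cring S by fact
  have "(p \<otimes> u \<oplus> q \<otimes> v) \<otimes> c' = c \<otimes> c'" using e1 by simp
  then show ?thesis using c e2 by (simp add: l_distr m_assoc)
qed

definition sr1e :: "('a, 'm) ring_scheme \<Rightarrow> 'a \<Rightarrow> bool" where
  "sr1e S r \<longleftrightarrow>
     (\<forall>a \<in> carrier S. \<forall>b \<in> carrier S.
        (\<exists>x \<in> carrier S. \<exists>z \<in> carrier S. \<exists>w \<in> carrier S. a \<otimes>\<^bsub>S\<^esub> x \<oplus>\<^bsub>S\<^esub> b \<otimes>\<^bsub>S\<^esub> z = \<one>\<^bsub>S\<^esub> \<oplus>\<^bsub>S\<^esub> w \<otimes>\<^bsub>S\<^esub> r)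
        \<longrightarrow> (\<exists>y \<in> carrier S. \<exists>u \<in> carrier S. \<exists>w \<in> carrier S. (a \<oplus>\<^bsub>S\<^esub> b \<otimes>\<^bsub>S\<^esub> y) \<otimes>\<^bsub>S\<^esub> u = \<one>\<^bsub>S\<^esub> \<oplus>\<^bsub>S\<^esub> w \<otimes>\<^bsub>S\<^esub> r))"

lemma minus_one_iff:
  fixes S (structure)
  assumes "cring S" "p \<in> carrier S" "q \<in> carrier S"
  shows "p \<ominus> \<one> = q \<longleftrightarrow> p = \<one> \<oplus> q"
proof -
  interpret cring S by fact
  show ?thesis
  proof
    assume "p \<ominus> \<one> = q"
    then have "\<one> \<oplus> (p \<ominus> \<one>) = \<one> \<oplus> q" by simp
    moreover have "\<one> \<oplus> (p \<ominus> \<one>) = p" using assms by (simp add: minus_eq a_ac r_neg)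
    ultimately show "p = \<one> \<oplus> q" by simp
  next
    assume "p = \<one> \<oplus> q"
    then show "p \<ominus> \<one> = q" using assms by (simp add: minus_eq a_ac r_neg)
  qed
qed

lemma sr1_mod_PIdl:
  fixes S (structure)
  assumes "cring S" "r \<in> carrier S"
  shows "sr1_mod S (PIdl r) \<longleftrightarrow> sr1e S r"
proof -
  interpret cring S by fact
  have mem: "p \<ominus> \<one> \<in> PIdl r \<longleftrightarrow> (\<exists>w \<in> carrier S. p = \<one> \<oplus> w \<otimes> r)" if "p \<in> carrier S" for p
    using minus_one_iff[OF assms(1) that] assms(2) unfolding cgenideal_def by auto
  show ?thesis
    unfolding sr1_mod_def sr1e_def
    by (simp add: mem)
qed

lemma locally_stable_iff:
  fixes S (structure)
  assumes "cring S"
  shows "locally_stable S \<longleftrightarrow>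
     (\<forall>a \<in> carrier S. \<forall>b \<in> carrier S.
        (\<exists>x \<in> carrier S. \<exists>z \<in> carrier S. a \<otimes> x \<oplus> b \<otimes> z = \<one>)
        \<longrightarrow> (\<exists>y \<in> carrier S. sr1e S (a \<oplus> b \<otimes> y)))"
proof -
  interpret cring S by fact
  have "stable_range_one (S Quot (PIdl (a \<oplus> b \<otimes> y))) \<longleftrightarrow> sr1e S (a \<oplus> b \<otimes> y)"
    if "a \<in> carrier S" "b \<in> carrier S" "y \<in> carrier S" for a b y
    using quot_sr1[OF assms cgenideal_ideal] sr1_mod_PIdl[OF assms] that by simp
  note eqv = this
  show ?thesis unfolding locally_stable_def
    by (intro ball_cong[OF refl] imp_cong[OF refl] bex_cong[OF refl] eqv)
qed

lemma fst_triv: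
  "fst (P \<otimes>\<^bsub>triv_ext A E\<^esub> Q) = fst P \<otimes>\<^bsub>A\<^esub> fst Q"
  "fst (P \<oplus>\<^bsub>triv_ext A E\<^esub> Q) = fst P \<oplus>\<^bsub>A\<^esub> fst Q"
  "fst (\<one>\<^bsub>triv_ext A E\<^esub>) = \<one>\<^bsub>A\<^esub>"
  "fst (\<zero>\<^bsub>triv_ext A E\<^esub>) = \<zero>\<^bsub>A\<^esub>"
  by (cases P; cases Q; simp add: triv_ext_simps)+

lemma fst_carrier: "P \<in> carrier (triv_ext A E) \<Longrightarrow> fst P \<in> carrier A"
  by (auto simp: triv_ext_simps)

lemma decomp:
  assumes "module A E" "P \<in> carrier (triv_ext A E)" "Q \<in> carrier (triv_ext A E)"
    and "fst P = \<one>\<^bsub>A\<^esub> \<oplus>\<^bsub>A\<^esub> fst Q"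
  shows "\<exists>c \<in> carrier (triv_ext A E). \<exists>c' \<in> carrier (triv_ext A E).
           P = c \<oplus>\<^bsub>triv_ext A E\<^esub> Q \<and> c \<otimes>\<^bsub>triv_ext A E\<^esub> c' = \<one>\<^bsub>triv_ext A E\<^esub>"
proof -
  interpret module A E by fact
  obtain p s where P: "P = (p, s)" by (cases P)
  obtain q t where Q: "Q = (q, t)" by (cases Q)
  have c: "p \<in> carrier A" "s \<in> carrier E" "q \<in> carrier A" "t \<in> carrier E"
    using assms(2,3) P Q by (auto simp: triv_ext_simps)
  define d where "d = s \<ominus>\<^bsub>E\<^esub> t"
  have d: "d \<in> carrier E" using c by (simp add: d_def)
  show ?thesis
  proof (intro bexI conjI)
    show "P = (\<one>\<^bsub>A\<^esub>, d) \<oplus>\<^bsub>triv_ext A E\<^esub> Q"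
      using assms(4) c P Q by (simp add: triv_ext_simps d_def M.minus_eq M.a_assoc M.l_neg)
    show "(\<one>\<^bsub>A\<^esub>, d) \<otimes>\<^bsub>triv_ext A E\<^esub> (\<one>\<^bsub>A\<^esub>, \<ominus>\<^bsub>E\<^esub> d) = \<one>\<^bsub>triv_ext A E\<^esub>"
      using d by (simp add: triv_ext_simps M.l_neg)
    show "(\<one>\<^bsub>A\<^esub>, d) \<in> carrier (triv_ext A E)" using d by (simp add: triv_ext_simps)
    show "(\<one>\<^bsub>A\<^esub>, \<ominus>\<^bsub>E\<^esub> d) \<in> carrier (triv_ext A E)" using d by (simp add: triv_ext_simps)
  qed
qed

lemma sr1e_triv:
  fixes A :: "('a, 'c) ring_scheme" and E :: "('a, 'b, 'd) module_scheme"
  assumes "module A E" "r \<in> carrier (triv_ext A E)"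
  shows "sr1e (triv_ext A E) r \<longleftrightarrow> sr1e A (fst r)"
proof -
  interpret module A E by fact
  let ?R = "triv_ext A E"
  have Rc: "cring ?R" by (rule triv_ext_cring) fact
  interpret R: cring ?R by (rule Rc)
  define \<iota> where "\<iota> t = (t, \<zero>\<^bsub>E\<^esub>)" for t :: 'a
  have \<iota>c: "t \<in> carrier A \<Longrightarrow> \<iota> t \<in> carrier ?R" for t by (simp add: \<iota>_def triv_ext_simps)
  have \<iota>f: "fst (\<iota> t) = t" for t by (simp add: \<iota>_def)
  have r0: "fst r \<in> carrier A" using assms(2) by (rule fst_carrier)
  show ?thesis
  proof
    assume H: "sr1e ?R r"
    show "sr1e A (fst r)" unfolding sr1e_def
    proof (intro ballI impI)
      fix a b assume ab: "a \<in> carrier A" "b \<in> carrier A"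
        and "\<exists>x \<in> carrier A. \<exists>z \<in> carrier A. \<exists>w \<in> carrier A.
               a \<otimes>\<^bsub>A\<^esub> x \<oplus>\<^bsub>A\<^esub> b \<otimes>\<^bsub>A\<^esub> z = \<one>\<^bsub>A\<^esub> \<oplus>\<^bsub>A\<^esub> w \<otimes>\<^bsub>A\<^esub> fst r"
      then obtain x z w where xzw: "x \<in> carrier A" "z \<in> carrier A" "w \<in> carrier A"
        "a \<otimes>\<^bsub>A\<^esub> x \<oplus>\<^bsub>A\<^esub> b \<otimes>\<^bsub>A\<^esub> z = \<one>\<^bsub>A\<^esub> \<oplus>\<^bsub>A\<^esub> w \<otimes>\<^bsub>A\<^esub> fst r" by blast
      define P where "P = \<iota> a \<otimes>\<^bsub>?R\<^esub> \<iota> x \<oplus>\<^bsub>?R\<^esub> \<iota> b \<otimes>\<^bsub>?R\<^esub> \<iota> z"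
      have Pc: "P \<in> carrier ?R" using ab xzw \<iota>c by (simp add: P_def)
      have Qc: "\<iota> w \<otimes>\<^bsub>?R\<^esub> r \<in> carrier ?R" using xzw \<iota>c assms(2) by simp
      have "fst P = \<one>\<^bsub>A\<^esub> \<oplus>\<^bsub>A\<^esub> fst (\<iota> w \<otimes>\<^bsub>?R\<^esub> r)"
        using xzw by (simp add: P_def fst_triv \<iota>f)
      then obtain c c' where cc: "c \<in> carrier ?R" "c' \<in> carrier ?R"
        "P = c \<oplus>\<^bsub>?R\<^esub> \<iota> w \<otimes>\<^bsub>?R\<^esub> r" "c \<otimes>\<^bsub>?R\<^esub> c' = \<one>\<^bsub>?R\<^esub>"
        using decomp[OF assms(1) Pc Qc] by blast
      have "\<iota> a \<otimes>\<^bsub>?R\<^esub> (\<iota> x \<otimes>\<^bsub>?R\<^esub> c') \<oplus>\<^bsub>?R\<^esub> \<iota> b \<otimes>\<^bsub>?R\<^esub> (\<iota> z \<otimes>\<^bsub>?R\<^esub> c')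
            = \<one>\<^bsub>?R\<^esub> \<oplus>\<^bsub>?R\<^esub> (\<iota> w \<otimes>\<^bsub>?R\<^esub> c') \<otimes>\<^bsub>?R\<^esub> r"
        by (rule fix2[OF Rc]) (use ab xzw \<iota>c cc assms(2) in \<open>simp_all add: P_def\<close>)
      moreover have "\<iota> x \<otimes>\<^bsub>?R\<^esub> c' \<in> carrier ?R" "\<iota> z \<otimes>\<^bsub>?R\<^esub> c' \<in> carrier ?R" "\<iota> w \<otimes>\<^bsub>?R\<^esub> c' \<in> carrier ?R"
        using xzw \<iota>c cc by simp_all
      ultimately have ex: "\<exists>x \<in> carrier ?R. \<exists>z \<in> carrier ?R. \<exists>w \<in> carrier ?R.
          \<iota> a \<otimes>\<^bsub>?R\<^esub> x \<oplus>\<^bsub>?R\<^esub> \<iota> b \<otimes>\<^bsub>?R\<^esub> z = \<one>\<^bsub>?R\<^esub> \<oplus>\<^bsub>?R\<^esub> w \<otimes>\<^bsub>?R\<^esub> r" by blast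
      from H[unfolded sr1e_def, rule_format, OF \<iota>c[OF ab(1)] \<iota>c[OF ab(2)] ex]
      obtain y u W where yuW: "y \<in> carrier ?R" "u \<in> carrier ?R" "W \<in> carrier ?R"
        "(\<iota> a \<oplus>\<^bsub>?R\<^esub> \<iota> b \<otimes>\<^bsub>?R\<^esub> y) \<otimes>\<^bsub>?R\<^esub> u = \<one>\<^bsub>?R\<^esub> \<oplus>\<^bsub>?R\<^esub> W \<otimes>\<^bsub>?R\<^esub> r" by blast
      from arg_cong[where f=fst, OF yuW(4)]
      have "(a \<oplus>\<^bsub>A\<^esub> b \<otimes>\<^bsub>A\<^esub> fst y) \<otimes>\<^bsub>A\<^esub> fst u = \<one>\<^bsub>A\<^esub> \<oplus>\<^bsub>A\<^esub> fst W \<otimes>\<^bsub>A\<^esub> fst r"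
        by (simp add: fst_triv \<iota>f)
      then show "\<exists>y \<in> carrier A. \<exists>u \<in> carrier A. \<exists>w \<in> carrier A.
          (a \<oplus>\<^bsub>A\<^esub> b \<otimes>\<^bsub>A\<^esub> y) \<otimes>\<^bsub>A\<^esub> u = \<one>\<^bsub>A\<^esub> \<oplus>\<^bsub>A\<^esub> w \<otimes>\<^bsub>A\<^esub> fst r"
        using fst_carrier yuW(1-3) by blast
    qed
  next
    assume H: "sr1e A (fst r)"
    show "sr1e ?R r" unfolding sr1e_def
    proof (intro ballI impI)
      fix a b assume ab: "a \<in> carrier ?R" "b \<in> carrier ?R"
        and "\<exists>x \<in> carrier ?R. \<exists>z \<in> carrier ?R. \<exists>w \<in> carrier ?R.
               a \<otimes>\<^bsub>?R\<^esub> x \<oplus>\<^bsub>?R\<^esub> b \<otimes>\<^bsub>?R\<^esub> z = \<one>\<^bsub>?R\<^esub> \<oplus>\<^bsub>?R\<^esub> w \<otimes>\<^bsub>?R\<^esub> r"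
      then obtain x z w where xzw: "x \<in> carrier ?R" "z \<in> carrier ?R" "w \<in> carrier ?R"
        "a \<otimes>\<^bsub>?R\<^esub> x \<oplus>\<^bsub>?R\<^esub> b \<otimes>\<^bsub>?R\<^esub> z = \<one>\<^bsub>?R\<^esub> \<oplus>\<^bsub>?R\<^esub> w \<otimes>\<^bsub>?R\<^esub> r" by blast
      from arg_cong[where f=fst, OF xzw(4)]
      have "fst a \<otimes>\<^bsub>A\<^esub> fst x \<oplus>\<^bsub>A\<^esub> fst b \<otimes>\<^bsub>A\<^esub> fst z = \<one>\<^bsub>A\<^esub> \<oplus>\<^bsub>A\<^esub> fst w \<otimes>\<^bsub>A\<^esub> fst r"
        by (simp add: fst_triv)
      then have ex: "\<exists>x \<in> carrier A. \<exists>z \<in> carrier A. \<exists>w \<in> carrier A.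
          fst a \<otimes>\<^bsub>A\<^esub> x \<oplus>\<^bsub>A\<^esub> fst b \<otimes>\<^bsub>A\<^esub> z = \<one>\<^bsub>A\<^esub> \<oplus>\<^bsub>A\<^esub> w \<otimes>\<^bsub>A\<^esub> fst r"
        using fst_carrier xzw(1-3) by blast
      from H[unfolded sr1e_def, rule_format, OF fst_carrier[OF ab(1)] fst_carrier[OF ab(2)] ex]
      obtain y0 u0 w0 where yuw: "y0 \<in> carrier A" "u0 \<in> carrier A" "w0 \<in> carrier A"
        "(fst a \<oplus>\<^bsub>A\<^esub> fst b \<otimes>\<^bsub>A\<^esub> y0) \<otimes>\<^bsub>A\<^esub> u0 = \<one>\<^bsub>A\<^esub> \<oplus>\<^bsub>A\<^esub> w0 \<otimes>\<^bsub>A\<^esub> fst r" by blast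
      define p where "p = a \<oplus>\<^bsub>?R\<^esub> b \<otimes>\<^bsub>?R\<^esub> \<iota> y0"
      have pc: "p \<in> carrier ?R" using ab yuw \<iota>c by (simp add: p_def)
      have Pc: "p \<otimes>\<^bsub>?R\<^esub> \<iota> u0 \<in> carrier ?R" using pc yuw \<iota>c by simp
      have Qc: "\<iota> w0 \<otimes>\<^bsub>?R\<^esub> r \<in> carrier ?R" using yuw \<iota>c assms(2) by simp
      have "fst (p \<otimes>\<^bsub>?R\<^esub> \<iota> u0) = \<one>\<^bsub>A\<^esub> \<oplus>\<^bsub>A\<^esub> fst (\<iota> w0 \<otimes>\<^bsub>?R\<^esub> r)"
        using yuw by (simp add: p_def fst_triv \<iota>f)
      then obtain c c' where cc: "c \<in> carrier ?R" "c' \<in> carrier ?R"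
        "p \<otimes>\<^bsub>?R\<^esub> \<iota> u0 = c \<oplus>\<^bsub>?R\<^esub> \<iota> w0 \<otimes>\<^bsub>?R\<^esub> r" "c \<otimes>\<^bsub>?R\<^esub> c' = \<one>\<^bsub>?R\<^esub>"
        using decomp[OF assms(1) Pc Qc] by blast
      have "p \<otimes>\<^bsub>?R\<^esub> (\<iota> u0 \<otimes>\<^bsub>?R\<^esub> c') = \<one>\<^bsub>?R\<^esub> \<oplus>\<^bsub>?R\<^esub> (\<iota> w0 \<otimes>\<^bsub>?R\<^esub> c') \<otimes>\<^bsub>?R\<^esub> r"
        by (rule fix1[OF Rc]) (use pc yuw \<iota>c cc assms(2) in simp_all)
      moreover have "\<iota> u0 \<otimes>\<^bsub>?R\<^esub> c' \<in> carrier ?R" "\<iota> w0 \<otimes>\<^bsub>?R\<^esub> c' \<in> carrier ?R" "\<iota> y0 \<in> carrier ?R"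
        using yuw \<iota>c cc by simp_all
      ultimately show "\<exists>y \<in> carrier ?R. \<exists>u \<in> carrier ?R. \<exists>w \<in> carrier ?R.
          (a \<oplus>\<^bsub>?R\<^esub> b \<otimes>\<^bsub>?R\<^esub> y) \<otimes>\<^bsub>?R\<^esub> u = \<one>\<^bsub>?R\<^esub> \<oplus>\<^bsub>?R\<^esub> w \<otimes>\<^bsub>?R\<^esub> r"
        unfolding p_def by blast
    qed
  qed
qed

theorem lemma3p11:
  fixes A :: "('a, 'c) ring_scheme" and E :: "('a, 'b, 'd) module_scheme"
  assumes "cring A" and "module A E"
  shows "locally_stable (triv_ext A E) \<longleftrightarrow> locally_stable A"
proof -
  interpret module A E by fact
  let ?R = "triv_ext A E"
  have Rc: "cring ?R" by (rule triv_ext_cring) fact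
  interpret R: cring ?R by (rule Rc)
  define \<iota> where "\<iota> t = (t, \<zero>\<^bsub>E\<^esub>)" for t :: 'a
  have \<iota>c: "t \<in> carrier A \<Longrightarrow> \<iota> t \<in> carrier ?R" for t by (simp add: \<iota>_def triv_ext_simps)
  have \<iota>f: "fst (\<iota> t) = t" for t by (simp add: \<iota>_def)
  show ?thesis unfolding locally_stable_iff[OF Rc] locally_stable_iff[OF assms(1)]
  proof
    assume H: "\<forall>a\<in>carrier ?R. \<forall>b\<in>carrier ?R.
      (\<exists>x\<in>carrier ?R. \<exists>z\<in>carrier ?R. a \<otimes>\<^bsub>?R\<^esub> x \<oplus>\<^bsub>?R\<^esub> b \<otimes>\<^bsub>?R\<^esub> z = \<one>\<^bsub>?R\<^esub>) \<longrightarrow>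
      (\<exists>y\<in>carrier ?R. sr1e ?R (a \<oplus>\<^bsub>?R\<^esub> b \<otimes>\<^bsub>?R\<^esub> y))"
    show "\<forall>a\<in>carrier A. \<forall>b\<in>carrier A.
      (\<exists>x\<in>carrier A. \<exists>z\<in>carrier A. a \<otimes>\<^bsub>A\<^esub> x \<oplus>\<^bsub>A\<^esub> b \<otimes>\<^bsub>A\<^esub> z = \<one>\<^bsub>A\<^esub>) \<longrightarrow>
      (\<exists>y\<in>carrier A. sr1e A (a \<oplus>\<^bsub>A\<^esub> b \<otimes>\<^bsub>A\<^esub> y))"
    proof (intro ballI impI)
      fix a b assume ab: "a \<in> carrier A" "b \<in> carrier A"
        and "\<exists>x\<in>carrier A. \<exists>z\<in>carrier A. a \<otimes>\<^bsub>A\<^esub> x \<oplus>\<^bsub>A\<^esub> b \<otimes>\<^bsub>A\<^esub> z = \<one>\<^bsub>A\<^esub>"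
      then obtain x z where xz: "x \<in> carrier A" "z \<in> carrier A"
        "a \<otimes>\<^bsub>A\<^esub> x \<oplus>\<^bsub>A\<^esub> b \<otimes>\<^bsub>A\<^esub> z = \<one>\<^bsub>A\<^esub>" by blast
      define P where "P = \<iota> a \<otimes>\<^bsub>?R\<^esub> \<iota> x \<oplus>\<^bsub>?R\<^esub> \<iota> b \<otimes>\<^bsub>?R\<^esub> \<iota> z"
      have Pc: "P \<in> carrier ?R" using ab xz \<iota>c by (simp add: P_def)
      have "fst P = \<one>\<^bsub>A\<^esub> \<oplus>\<^bsub>A\<^esub> fst (\<zero>\<^bsub>?R\<^esub>)"
        using xz by (simp add: P_def fst_triv \<iota>f)
      then obtain c c' where cc: "c \<in> carrier ?R" "c' \<in> carrier ?R"
        "P = c \<oplus>\<^bsub>?R\<^esub> \<zero>\<^bsub>?R\<^esub>" "c \<otimes>\<^bsub>?R\<^esub> c' = \<one>\<^bsub>?R\<^esub>"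
        using decomp[OF assms(2) Pc R.zero_closed] by blast
      have "\<iota> a \<otimes>\<^bsub>?R\<^esub> (\<iota> x \<otimes>\<^bsub>?R\<^esub> c') \<oplus>\<^bsub>?R\<^esub> \<iota> b \<otimes>\<^bsub>?R\<^esub> (\<iota> z \<otimes>\<^bsub>?R\<^esub> c') = \<one>\<^bsub>?R\<^esub>"
        by (rule fix0[OF Rc]) (use ab xz \<iota>c cc in \<open>simp_all add: P_def\<close>)
      moreover have "\<iota> x \<otimes>\<^bsub>?R\<^esub> c' \<in> carrier ?R" "\<iota> z \<otimes>\<^bsub>?R\<^esub> c' \<in> carrier ?R"
        using xz \<iota>c cc by simp_all
      ultimately have ex: "\<exists>x\<in>carrier ?R. \<exists>z\<in>carrier ?R. \<iota> a \<otimes>\<^bsub>?R\<^esub> x \<oplus>\<^bsub>?R\<^esub> \<iota> b \<otimes>\<^bsub>?R\<^esub> z = \<one>\<^bsub>?R\<^esub>"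
        by blast
      from H[rule_format, OF \<iota>c[OF ab(1)] \<iota>c[OF ab(2)] ex]
      obtain y where y: "y \<in> carrier ?R" "sr1e ?R (\<iota> a \<oplus>\<^bsub>?R\<^esub> \<iota> b \<otimes>\<^bsub>?R\<^esub> y)" by blast
      have "\<iota> a \<oplus>\<^bsub>?R\<^esub> \<iota> b \<otimes>\<^bsub>?R\<^esub> y \<in> carrier ?R" using y ab \<iota>c by simp
      from sr1e_triv[OF assms(2) this] y(2)
      have "sr1e A (a \<oplus>\<^bsub>A\<^esub> b \<otimes>\<^bsub>A\<^esub> fst y)" by (simp add: fst_triv \<iota>f)
      then show "\<exists>y\<in>carrier A. sr1e A (a \<oplus>\<^bsub>A\<^esub> b \<otimes>\<^bsub>A\<^esub> y)"
        using fst_carrier[OF y(1)] by blast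
    qed
  next
    assume H: "\<forall>a\<in>carrier A. \<forall>b\<in>carrier A.
      (\<exists>x\<in>carrier A. \<exists>z\<in>carrier A. a \<otimes>\<^bsub>A\<^esub> x \<oplus>\<^bsub>A\<^esub> b \<otimes>\<^bsub>A\<^esub> z = \<one>\<^bsub>A\<^esub>) \<longrightarrow>
      (\<exists>y\<in>carrier A. sr1e A (a \<oplus>\<^bsub>A\<^esub> b \<otimes>\<^bsub>A\<^esub> y))"
    show "\<forall>a\<in>carrier ?R. \<forall>b\<in>carrier ?R.
      (\<exists>x\<in>carrier ?R. \<exists>z\<in>carrier ?R. a \<otimes>\<^bsub>?R\<^esub> x \<oplus>\<^bsub>?R\<^esub> b \<otimes>\<^bsub>?R\<^esub> z = \<one>\<^bsub>?R\<^esub>) \<longrightarrow>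
      (\<exists>y\<in>carrier ?R. sr1e ?R (a \<oplus>\<^bsub>?R\<^esub> b \<otimes>\<^bsub>?R\<^esub> y))"
    proof (intro ballI impI)
      fix a b assume ab: "a \<in> carrier ?R" "b \<in> carrier ?R"
        and "\<exists>x\<in>carrier ?R. \<exists>z\<in>carrier ?R. a \<otimes>\<^bsub>?R\<^esub> x \<oplus>\<^bsub>?R\<^esub> b \<otimes>\<^bsub>?R\<^esub> z = \<one>\<^bsub>?R\<^esub>"
      then obtain x z where xz: "x \<in> carrier ?R" "z \<in> carrier ?R"
        "a \<otimes>\<^bsub>?R\<^esub> x \<oplus>\<^bsub>?R\<^esub> b \<otimes>\<^bsub>?R\<^esub> z = \<one>\<^bsub>?R\<^esub>" by blast
      from arg_cong[where f=fst, OF xz(3)]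
      have "fst a \<otimes>\<^bsub>A\<^esub> fst x \<oplus>\<^bsub>A\<^esub> fst b \<otimes>\<^bsub>A\<^esub> fst z = \<one>\<^bsub>A\<^esub>" by (simp add: fst_triv)
      then have ex: "\<exists>x\<in>carrier A. \<exists>z\<in>carrier A. fst a \<otimes>\<^bsub>A\<^esub> x \<oplus>\<^bsub>A\<^esub> fst b \<otimes>\<^bsub>A\<^esub> z = \<one>\<^bsub>A\<^esub>"
        using fst_carrier xz(1,2) by blast
      from H[rule_format, OF fst_carrier[OF ab(1)] fst_carrier[OF ab(2)] ex]
      obtain y0 where y0: "y0 \<in> carrier A" "sr1e A (fst a \<oplus>\<^bsub>A\<^esub> fst b \<otimes>\<^bsub>A\<^esub> y0)" by blast
      have "a \<oplus>\<^bsub>?R\<^esub> b \<otimes>\<^bsub>?R\<^esub> \<iota> y0 \<in> carrier ?R" using y0 ab \<iota>c by simp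
      from sr1e_triv[OF assms(2) this] y0(2)
      have "sr1e ?R (a \<oplus>\<^bsub>?R\<^esub> b \<otimes>\<^bsub>?R\<^esub> \<iota> y0)" by (simp add: fst_triv \<iota>f)
      then show "\<exists>y\<in>carrier ?R. sr1e ?R (a \<oplus>\<^bsub>?R\<^esub> b \<otimes>\<^bsub>?R\<^esub> y)"
        using \<iota>c[OF y0(1)] by blast
    qed
  qed
qed

end
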